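(* Let $G$ be a connected bipartite graph with $n\ge 2$ vertices and diameter $D$. Then $$EE(G) \ge 2\cosh\sqrt[D]{n-1} + (n-2),$$ with equality if and only if $G\cong S_n$.
   Context: All graphs are finite, simple and undirected. For a graph $G$ with adjacency matrix $A(G)$ having eigenvalues $\lambda_1\ge\cdots\ge\lambda_n$, the Estrada index is $EE(G)=\sum_{i=1}^n e^{\lambda_i}$. The diameter $D$ is the maximum over all pairs of vertices of the length of a shortest path between them. $S_n=K_{1,n-1}$ is the star on $n$ vertices. *)

theory Defs
  imports "Jordan_Normal_Form.Char_Poly"
begin

definition simple_graph :: "nat \<Rightarrow> (nat \<Rightarrow> nat \<Rightarrow> bool) \<Rightarrow> bool" where
  "simple_graph n E \<longleftrightarrow> (\<forall>u v. E u v \<longrightarrow> E v u) \<and> (\<forall>u. \<not> E u u)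
     \<and> (\<forall>u v. E u v \<longrightarrow> u < n \<and> v < n)"

definition adj_mat :: "nat \<Rightarrow> (nat \<Rightarrow> nat \<Rightarrow> bool) \<Rightarrow> real mat" where
  "adj_mat n E = mat n n (\<lambda>(i, j). if E i j then 1 else 0)"

definition adj_eigenvalues :: "nat \<Rightarrow> (nat \<Rightarrow> nat \<Rightarrow> bool) \<Rightarrow> complex list" where
  "adj_eigenvalues n E = (SOME es. length es = n \<and>
     char_poly (map_mat complex_of_real (adj_mat n E)) = (\<Prod>a\<leftarrow>es. [:- a, 1:]))"

definition estrada_index :: "nat \<Rightarrow> (nat \<Rightarrow> nat \<Rightarrow> bool) \<Rightarrow> real" where
  "estrada_index n E = Re (\<Sum>e\<leftarrow>adj_eigenvalues n E. exp e)"

definition is_walk :: "nat \<Rightarrow> (nat \<Rightarrow> nat \<Rightarrow> bool) \<Rightarrow> nat list \<Rightarrow> bool" where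
  "is_walk n E xs \<longleftrightarrow> xs \<noteq> [] \<and> (\<forall>x\<in>set xs. x < n)
     \<and> (\<forall>i. Suc i < length xs \<longrightarrow> E (xs ! i) (xs ! Suc i))"

definition connected_graph :: "nat \<Rightarrow> (nat \<Rightarrow> nat \<Rightarrow> bool) \<Rightarrow> bool" where
  "connected_graph n E \<longleftrightarrow>
     (\<forall>u v. u < n \<longrightarrow> v < n \<longrightarrow> (\<exists>xs. is_walk n E xs \<and> hd xs = u \<and> last xs = v))"

definition graph_dist :: "nat \<Rightarrow> (nat \<Rightarrow> nat \<Rightarrow> bool) \<Rightarrow> nat \<Rightarrow> nat \<Rightarrow> nat" where
  "graph_dist n E u v = (LEAST k. \<exists>xs. is_walk n E xs \<and> hd xs = u \<and> last xs = v
                                        \<and> length xs = Suc k)"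

definition diameter :: "nat \<Rightarrow> (nat \<Rightarrow> nat \<Rightarrow> bool) \<Rightarrow> nat" where
  "diameter n E = Max {graph_dist n E u v | u v. u < n \<and> v < n}"

definition bipartite :: "nat \<Rightarrow> (nat \<Rightarrow> nat \<Rightarrow> bool) \<Rightarrow> bool" where
  "bipartite n E \<longleftrightarrow> (\<exists>X. \<forall>u v. u < n \<longrightarrow> v < n \<longrightarrow> E u v \<longrightarrow> (u \<in> X \<longleftrightarrow> v \<notin> X))"

definition is_star :: "nat \<Rightarrow> (nat \<Rightarrow> nat \<Rightarrow> bool) \<Rightarrow> bool" where
  "is_star n E \<longleftrightarrow> (\<exists>c<n. \<forall>u v. u < n \<longrightarrow> v < n \<longrightarrow>
       (E u v \<longleftrightarrow> u \<noteq> v \<and> (u = c \<or> v = c)))"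

end

theory Submission
  imports Defs "Jordan_Normal_Form.Schur_Decomposition"
begin



definition aE :: "(nat \<Rightarrow> nat \<Rightarrow> bool) \<Rightarrow> nat \<Rightarrow> nat \<Rightarrow> real" where
  "aE E u v = (if E u v then 1 else 0)"

fun W :: "nat \<Rightarrow> (nat \<Rightarrow> nat \<Rightarrow> bool) \<Rightarrow> nat \<Rightarrow> nat \<Rightarrow> nat \<Rightarrow> real" where
  "W n E 0 u v = (if u = v then 1 else 0)"
| "W n E (Suc k) u v = (\<Sum>w<n. W n E k u w * aE E w v)"

lemma aE_nonneg: "aE E u v \<ge> 0" by (simp add: aE_def)

lemma W_nonneg: "W n E k u v \<ge> 0"
  by (induction k arbitrary: v) (auto intro!: sum_nonneg mult_nonneg_nonneg simp: aE_def)

lemma W_add: "v < n \<Longrightarrow> W n E (a + b) u v = (\<Sum>w<n. W n E a u w * W n E b w v)"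
proof (induction b arbitrary: v)
  case 0
  have "(\<Sum>w<n. W n E a u w * W n E 0 w v) = (\<Sum>w\<in>{v}. W n E a u w * W n E 0 w v)"
    by (rule sum.mono_neutral_right) (use 0 in auto)
  then show ?case by simp
next
  case (Suc b)
  have "W n E (a + Suc b) u v = (\<Sum>x<n. W n E (a+b) u x * aE E x v)" by simp
  also have "\<dots> = (\<Sum>x<n. (\<Sum>w<n. W n E a u w * W n E b w x) * aE E x v)"
    using Suc.IH by (intro sum.cong) auto
  also have "\<dots> = (\<Sum>w<n. W n E a u w * (\<Sum>x<n. W n E b w x * aE E x v))"
    by (simp add: sum_distrib_left sum_distrib_right mult.assoc) (rule sum.swap)
  finally show ?case by simp
qed

lemma W_one: "u < n \<Longrightarrow> W n E 1 u v = aE E u v"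
proof -
  assume u: "u < n"
  have "W n E 1 u v = (\<Sum>w<n. (if u = w then 1 else 0) * aE E w v)" by simp
  also have "\<dots> = (\<Sum>w\<in>{u}. (if u = w then 1 else 0) * aE E w v)"
    by (rule sum.mono_neutral_right) (use u in auto)
  finally show ?thesis by simp
qed

lemma W_Suc_left: "u < n \<Longrightarrow> v < n \<Longrightarrow> W n E (Suc k) u v = (\<Sum>w<n. aE E u w * W n E k w v)"
  using W_add[of v n E 1 k u] W_one[of u n E] by simp

context fixes n E assumes sg: "simple_graph n E"
begin

lemma E_sym: "E u v \<Longrightarrow> E v u" using sg unfolding simple_graph_def by blast
lemma E_irr: "\<not> E u u" using sg unfolding simple_graph_def by blast
lemma E_lt: "E u v \<Longrightarrow> u < n \<and> v < n" using sg unfolding simple_graph_def by blast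
lemma aE_sym: "aE E u v = aE E v u" using E_sym unfolding aE_def by auto

lemma W_sym: "u < n \<Longrightarrow> v < n \<Longrightarrow> W n E k u v = W n E k v u"
proof (induction k arbitrary: u v)
  case 0 then show ?case by simp
next
  case (Suc k)
  have "W n E (Suc k) u v = (\<Sum>w<n. W n E k u w * aE E w v)" by simp
  also have "\<dots> = (\<Sum>w<n. aE E v w * W n E k w u)"
    using Suc by (intro sum.cong) (auto simp: aE_sym)
  also have "\<dots> = W n E (Suc k) v u" using W_Suc_left[of v n u E k] Suc by simp
  finally show ?case .
qed

definition tr :: "nat \<Rightarrow> real" where "tr k = (\<Sum>u<n. W n E k u u)"

lemma tr_add: "tr (i + j) = (\<Sum>u<n. \<Sum>v<n. W n E i u v * W n E j u v)"
  unfolding tr_def by (intro sum.cong refl) (simp add: W_add W_sym)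

lemma W_parity:
  assumes bip: "\<forall>u v. u < n \<longrightarrow> v < n \<longrightarrow> E u v \<longrightarrow> (u \<in> X \<longleftrightarrow> v \<notin> X)"
  shows "u < n \<Longrightarrow> v < n \<Longrightarrow> W n E k u v \<noteq> 0 \<Longrightarrow> ((u \<in> X) = (v \<in> X)) = even k"
proof (induction k arbitrary: v)
  case 0 then show ?case by (simp split: if_splits)
next
  case (Suc k)
  have "(\<Sum>w<n. W n E k u w * aE E w v) \<noteq> 0" using Suc.prems(3) by simp
  then obtain w where w: "w < n" "W n E k u w * aE E w v \<noteq> 0"
    by (meson lessThan_iff sum.not_neutral_contains_not_neutral)
  then have w2: "W n E k u w \<noteq> 0" "E w v" by (auto simp: aE_def split: if_splits)
  have ih: "((u \<in> X) = (w \<in> X)) = even k" using Suc.IH[of w] w(1) w2(1) Suc.prems(1) by blast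
  have "(w \<in> X) = (v \<notin> X)" using bip w(1) Suc.prems(2) w2(2) by blast
  then show ?case using ih by auto
qed

lemma tr_odd:
  assumes bip: "\<forall>u v. u < n \<longrightarrow> v < n \<longrightarrow> E u v \<longrightarrow> (u \<in> X \<longleftrightarrow> v \<notin> X)"
  and "odd k" shows "tr k = 0"
  unfolding tr_def
proof (intro sum.neutral ballI)
  fix u assume "u \<in> {..<n}"
  then show "W n E k u u = 0" using W_parity[OF bip, of u u k] assms(2) by auto
qed

definition rs :: "nat \<Rightarrow> nat \<Rightarrow> real" where "rs k u = (\<Sum>v<n. W n E k u v)"

lemma rs_nonneg: "rs k u \<ge> 0" unfolding rs_def by (intro sum_nonneg W_nonneg)

lemma rs_add: "u < n \<Longrightarrow> rs (a + b) u = (\<Sum>w<n. W n E a u w * rs b w)"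
  unfolding rs_def by (simp add: W_add sum_distrib_left) (rule sum.swap)

lemma rs_add_ge:
  assumes "u < n" "\<And>w. w < n \<Longrightarrow> rs b w \<ge> c"
  shows "rs (a + b) u \<ge> c * rs a u"
proof -
  have "c * rs a u = (\<Sum>w<n. W n E a u w * c)" unfolding rs_def by (simp add: sum_distrib_left mult.commute)
  also have "\<dots> \<le> (\<Sum>w<n. W n E a u w * rs b w)"
    using assms by (intro sum_mono mult_left_mono W_nonneg) auto
  finally show ?thesis using rs_add[OF assms(1)] by simp
qed

lemma card_ins_le: "finite A \<Longrightarrow> card (insert x A) \<le> Suc (card A)"
  by (simp add: card_insert_if)

fun Bs :: "nat \<Rightarrow> nat \<Rightarrow> nat set" where
  "Bs 0 u = {u}"
| "Bs (Suc k) u = insert u (\<Union>w\<in>{w. w < n \<and> E u w}. Bs k w)"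

lemma Bs_self: "u \<in> Bs k u" by (cases k) auto

lemma Bs_fin: "finite (Bs k u)"
  by (induction k arbitrary: u) auto

lemma Bs_sub: "u < n \<Longrightarrow> Bs k u \<subseteq> {..<n}"
  by (induction k arbitrary: u) auto

lemma Bs_mono1: "Bs k u \<subseteq> Bs (Suc k) u"
  by (induction k arbitrary: u) (auto simp: Bs_self)

lemma Bs_mono: "k \<le> m \<Longrightarrow> Bs k u \<subseteq> Bs m u"
proof (induction m rule: dec_induct)
  case base show ?case by simp
next
  case (step m) thus ?case using Bs_mono1[of m u] by blast
qed

lemma Bs_card: "1 \<le> k \<Longrightarrow> u < n \<Longrightarrow> real (card (Bs k u)) - 1 \<le> rs k u"
proof (induction k arbitrary: u rule: dec_induct)
  case base
  have eq: "Bs 1 u = insert u {w. w < n \<and> E u w}" by auto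
  have "u \<notin> {w. w < n \<and> E u w}" using E_irr by auto
  then have "card (Bs 1 u) = Suc (card {w. w < n \<and> E u w})" unfolding eq by simp
  moreover have "rs 1 u = real (card {w. w < n \<and> E u w})"
    unfolding rs_def using W_one[OF base] by (simp add: aE_def sum.If_cases Int_def)
  ultimately show ?case by simp
next
  case (step k)
  let ?N = "{w. w < n \<and> E u w}"
  have eqB: "Bs (Suc k) u = insert u (\<Union>w\<in>?N. Bs k w - {u})" by auto
  have fU: "finite (\<Union>w\<in>?N. Bs k w - {u})" by (auto simp: Bs_fin)
  have "card (insert u (\<Union>w\<in>?N. Bs k w - {u})) \<le> Suc (card (\<Union>w\<in>?N. Bs k w - {u}))"
    by (rule card_ins_le[OF fU])
  then have h1: "card (Bs (Suc k) u) \<le> Suc (card (\<Union>w\<in>?N. Bs k w - {u}))"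
    by (subst eqB)
  have h2: "card (\<Union>w\<in>?N. Bs k w - {u}) \<le> (\<Sum>w\<in>?N. card (Bs k w - {u}))"
    by (rule card_UN_le) simp
  have "card (Bs (Suc k) u) \<le> Suc (\<Sum>w\<in>?N. card (Bs k w - {u}))" using h1 h2 by linarith
  then have "real (card (Bs (Suc k) u)) \<le> real (Suc (\<Sum>w\<in>?N. card (Bs k w - {u})))"
    by (rule of_nat_mono)
  then have c1: "real (card (Bs (Suc k) u)) - 1 \<le> (\<Sum>w\<in>?N. real (card (Bs k w - {u})))"
    by simp
  have "u \<in> Bs k w" if "w \<in> ?N" for w
  proof -
    have "u \<in> Bs 1 w" using that E_sym E_lt by auto
    then show ?thesis using Bs_mono[OF step(1)] by blast
  qed
  note uin = this
  have c2: "(\<Sum>w\<in>?N. real (card (Bs k w - {u}))) = (\<Sum>w\<in>?N. real (card (Bs k w)) - 1)"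
  proof (intro sum.cong refl)
    fix w assume "w \<in> ?N"
    moreover have "card (Bs k w) > 0" using Bs_fin Bs_self card_gt_0_iff by blast
    ultimately show "real (card (Bs k w - {u})) = real (card (Bs k w)) - 1"
      using uin by (simp add: Bs_fin card_Diff_singleton of_nat_diff)
  qed
  have "(\<Sum>w\<in>?N. real (card (Bs k w)) - 1) \<le> (\<Sum>w\<in>?N. rs k w)"
    using step(3) by (intro sum_mono) auto
  also have "\<dots> = (\<Sum>w<n. aE E u w * rs k w)"
    by (rule sum.mono_neutral_cong_left) (auto simp: aE_def)
  also have "\<dots> = (\<Sum>v<n. \<Sum>w<n. aE E u w * W n E k w v)"
    unfolding rs_def by (simp add: sum_distrib_left) (rule sum.swap)
  also have "\<dots> = rs (Suc k) u"
    unfolding rs_def using step(4) by (intro sum.cong refl) (simp only: W_Suc_left lessThan_iff)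
  finally show ?case using c1 c2 by simp
qed

lemma walk_Bs: "is_walk n E xs \<Longrightarrow> length xs = Suc d \<Longrightarrow> last xs \<in> Bs d (hd xs)"
proof (induction d arbitrary: xs)
  case 0 then show ?case by (cases xs) auto
next
  case (Suc d)
  then obtain u ys where xs: "xs = u # ys" by (cases xs) auto
  with Suc.prems have ys: "ys \<noteq> []" "length ys = Suc d" by auto
  have wys: "is_walk n E ys" using Suc.prems(1) ys unfolding xs is_walk_def
    by (auto simp: nth_Cons_Suc)
  have "E u (hd ys)" using Suc.prems(1) ys unfolding xs is_walk_def
    by (auto simp: hd_conv_nth dest: spec[of _ 0])
  moreover have "hd ys < n" using wys unfolding is_walk_def by auto
  moreover have "last ys \<in> Bs d (hd ys)" using Suc.IH[OF wys ys(2)] .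
  ultimately show ?case using xs ys by auto
qed

lemma walk_W: "is_walk n E xs \<Longrightarrow> length xs = Suc d \<Longrightarrow> W n E d (hd xs) (last xs) \<ge> 1"
proof (induction d arbitrary: xs)
  case 0 then show ?case by (cases xs) auto
next
  case (Suc d)
  then obtain u ys where xs: "xs = u # ys" by (cases xs) auto
  with Suc.prems have ys: "ys \<noteq> []" "length ys = Suc d" by auto
  have wys: "is_walk n E ys" using Suc.prems(1) ys unfolding xs is_walk_def
    by (auto simp: nth_Cons_Suc)
  have e: "E u (hd ys)" using Suc.prems(1) ys unfolding xs is_walk_def
    by (auto simp: hd_conv_nth dest: spec[of _ 0])
  have lt: "hd ys < n" "last ys < n" "u < n" using wys Suc.prems(1) unfolding is_walk_def xs by auto
  have "1 \<le> aE E u (hd ys) * W n E d (hd ys) (last ys)" using Suc.IH[OF wys ys(2)] e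
    by (simp add: aE_def)
  also have "\<dots> \<le> (\<Sum>w<n. aE E u w * W n E d w (last ys))"
    using lt by (intro member_le_sum mult_nonneg_nonneg aE_nonneg W_nonneg) auto
  also have "\<dots> = W n E (Suc d) u (last ys)" using W_Suc_left lt by simp
  finally show ?case using xs ys by simp
qed


lemma gd_walk:
  assumes con: "connected_graph n E" and "u < n" "v < n"
  shows "\<exists>xs. is_walk n E xs \<and> hd xs = u \<and> last xs = v \<and> length xs = Suc (graph_dist n E u v)"
proof -
  obtain xs where "is_walk n E xs" "hd xs = u" "last xs = v" using con assms unfolding connected_graph_def by blast
  then have "\<exists>k xs. is_walk n E xs \<and> hd xs = u \<and> last xs = v \<and> length xs = Suc k"
    by (intro exI[of _ "length xs - 1"] exI[of _ xs]) (auto simp: is_walk_def)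
  then show ?thesis unfolding graph_dist_def by (rule LeastI_ex)
qed

lemma gd_le: "is_walk n E xs \<Longrightarrow> hd xs = u \<Longrightarrow> last xs = v \<Longrightarrow> length xs = Suc k \<Longrightarrow> graph_dist n E u v \<le> k"
  unfolding graph_dist_def by (rule Least_le) blast

lemma diam_fin: "finite {graph_dist n E u v | u v. u < n \<and> v < n}"
proof -
  have "{graph_dist n E u v | u v. u < n \<and> v < n} = (\<lambda>(u,v). graph_dist n E u v) ` ({..<n} \<times> {..<n})"
    by auto
  then show ?thesis by simp
qed

lemma gd_le_diam: "u < n \<Longrightarrow> v < n \<Longrightarrow> graph_dist n E u v \<le> diameter n E"
  unfolding diameter_def by (rule Max_ge[OF diam_fin]) blast

lemma Bs_diam:
  assumes con: "connected_graph n E" and u: "u < n"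
  shows "Bs (diameter n E) u = {..<n}"
proof
  show "Bs (diameter n E) u \<subseteq> {..<n}" using Bs_sub[OF u] .
  show "{..<n} \<subseteq> Bs (diameter n E) u"
  proof
    fix v assume "v \<in> {..<n}"
    then have v: "v < n" by simp
    obtain xs where xs: "is_walk n E xs" "hd xs = u" "last xs = v" "length xs = Suc (graph_dist n E u v)"
      using gd_walk[OF con u v] by blast
    have "v \<in> Bs (graph_dist n E u v) u" using walk_Bs[OF xs(1) xs(4)] xs by simp
    then show "v \<in> Bs (diameter n E) u" using Bs_mono[OF gd_le_diam[OF u v]] by blast
  qed
qed

lemma gd_ge2:
  assumes con: "connected_graph n E" and "u < n" "v < n" "u \<noteq> v" "\<not> E u v"
  shows "graph_dist n E u v \<ge> 2"
proof (rule ccontr)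
  assume "\<not> graph_dist n E u v \<ge> 2"
  then have c: "graph_dist n E u v = 0 \<or> graph_dist n E u v = 1" by auto
  obtain xs where xs: "is_walk n E xs" "hd xs = u" "last xs = v" "length xs = Suc (graph_dist n E u v)"
    using gd_walk[OF con assms(2,3)] by blast
  show False
  proof (cases "graph_dist n E u v = 0")
    case True
    then obtain a where "xs = [a]" using xs(4) by (cases xs) auto
    then show False using xs assms(4) by simp
  next
    case False
    with c have "length xs = 2" using xs(4) by simp
    then obtain a b where ab: "xs = [a, b]" by (cases xs; cases "tl xs") auto
    then have "E a b" using xs(1) unfolding is_walk_def by (auto dest: spec[of _ 0])
    then show False using ab xs assms(5) by simp
  qed
qed

lemma gd_ge1:
  assumes con: "connected_graph n E" and "u < n" "v < n" "u \<noteq> v"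
  shows "graph_dist n E u v \<ge> 1"
proof (rule ccontr)
  assume "\<not> graph_dist n E u v \<ge> 1"
  then have c: "graph_dist n E u v = 0" by auto
  obtain xs where xs: "is_walk n E xs" "hd xs = u" "last xs = v" "length xs = Suc (graph_dist n E u v)"
    using gd_walk[OF con assms(2,3)] by blast
  then obtain a where "xs = [a]" using c by (cases xs) auto
  then show False using xs assms(4) by simp
qed

lemma diam_ge1:
  assumes con: "connected_graph n E" and "n \<ge> 2" shows "diameter n E \<ge> 1"
  using gd_ge1[OF con, of 0 1] gd_le_diam[of 0 1] assms by linarith

lemma rs_diam:
  assumes con: "connected_graph n E" and n2: "n \<ge> 2" and u: "u < n"
  shows "rs (diameter n E) u \<ge> real n - 1"
  using Bs_card[OF diam_ge1[OF con n2] u] Bs_diam[OF con u] by simp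

lemma rs_diam_pow:
  assumes con: "connected_graph n E" and n2: "n \<ge> 2" and u: "u < n"
  shows "rs (diameter n E * j) u \<ge> (real n - 1) ^ j"
  using u
proof (induction j arbitrary: u)
  case 0
  have "rs 0 u = (\<Sum>v\<in>{u}. W n E 0 u v)" unfolding rs_def
    by (rule sum.mono_neutral_right) (use 0 in auto)
  then show ?case by simp
next
  case (Suc j)
  have "rs (diameter n E * j + diameter n E) u \<ge> (real n - 1) * rs (diameter n E * j) u"
    by (rule rs_add_ge[OF Suc.prems]) (rule rs_diam[OF con n2])
  moreover have "(real n - 1) * rs (diameter n E * j) u \<ge> (real n - 1) * (real n - 1) ^ j"
    using Suc n2 by (intro mult_left_mono) auto
  ultimately show ?case by (simp add: add.commute)
qed

lemma cs_sum: fixes x :: "nat \<Rightarrow> real"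
  shows "(\<Sum>v\<in>A. x v)^2 \<le> real (card A) * (\<Sum>v\<in>A. (x v)^2)"
proof -
  let ?S = "(\<Sum>v\<in>A. x v)" and ?Q = "(\<Sum>v\<in>A. (x v)^2)"
  have "0 \<le> (\<Sum>v\<in>A. \<Sum>w\<in>A. (x v - x w)^2)" by (intro sum_nonneg) simp
  also have "\<dots> = (\<Sum>v\<in>A. \<Sum>w\<in>A. (x v)^2 + (x w)^2 - 2 * (x v * x w))"
    by (intro sum.cong refl) (simp add: power2_diff)
  also have "\<dots> = (\<Sum>v\<in>A. \<Sum>w\<in>A. (x v)^2) + (\<Sum>v\<in>A. \<Sum>w\<in>A. (x w)^2) - 2 * (\<Sum>v\<in>A. \<Sum>w\<in>A. x v * x w)"
    by (simp only: sum.distrib sum_subtractf sum_distrib_left)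
  also have "(\<Sum>v\<in>A. \<Sum>w\<in>A. (x v)^2) = real (card A) * ?Q"
    by (simp add: sum_distrib_left)
  also have "(\<Sum>v\<in>A. \<Sum>w\<in>A. (x w)^2) = real (card A) * ?Q"
    by simp
  also have "(\<Sum>v\<in>A. \<Sum>w\<in>A. x v * x w) = ?S^2"
    by (simp add: sum_product power2_eq_square)
  finally show ?thesis by simp
qed

lemma tr_lower:
  assumes n2: "n \<ge> 2"
  shows "tr (2 * L) \<ge> (\<Sum>u<n. (rs L u)^2) / real n"
proof -
  have "tr (2 * L) = (\<Sum>u<n. \<Sum>v<n. (W n E L u v)^2)"
    using tr_add[of L L] by (simp add: power2_eq_square mult_2)
  moreover have "(rs L u)^2 / real n \<le> (\<Sum>v<n. (W n E L u v)^2)" for u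
    using cs_sum[of "W n E L u" "{..<n}"] n2 unfolding rs_def by (simp add: field_simps)
  ultimately show ?thesis by (simp add: sum_divide_distrib sum_mono)
qed

lemma tr_diam:
  assumes con: "connected_graph n E" and n2: "n \<ge> 2"
  shows "tr (2 * (diameter n E * j)) \<ge> (real n - 1) ^ (2 * j)"
proof -
  have "(\<Sum>u<n. ((real n - 1) ^ j)^2) \<le> (\<Sum>u<n. (rs (diameter n E * j) u)^2)"
    using rs_diam_pow[OF con n2] n2 by (intro sum_mono power_mono) auto
  then have "real n * ((real n - 1) ^ j)^2 / real n \<le> (\<Sum>u<n. (rs (diameter n E * j) u)^2) / real n"
    by (simp only: sum_constant divide_right_mono of_nat_0_le_iff card_lessThan)
  moreover have "real n * ((real n - 1) ^ j)^2 / real n = ((real n - 1) ^ j)^2" using n2 by simp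
  ultimately have X: "((real n - 1) ^ j)^2 \<le> (\<Sum>u<n. (rs (diameter n E * j) u)^2) / real n"
    by simp
  have "((real n - 1)^j)^2 = (real n - 1)^(2*j)" by (simp add: power_mult[symmetric] mult.commute)
  then show ?thesis using order_trans[OF X tr_lower[OF n2, of "diameter n E * j"]] by simp
qed

end




lemma mult_entry:
  fixes A B :: "'a :: comm_semiring_1 mat"
  assumes "A \<in> carrier_mat n n" "B \<in> carrier_mat n n" "i < n" "j < n"
  shows "(A * B) $$ (i,j) = (\<Sum>l<n. A $$ (i,l) * B $$ (l,j))"
  using assms by (auto simp: scalar_prod_def lessThan_atLeast0 intro!: sum.cong)

definition ctr :: "nat \<Rightarrow> 'a :: comm_semiring_1 mat \<Rightarrow> 'a" where
  "ctr n M = (\<Sum>i<n. M $$ (i,i))"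

lemma ctr_comm:
  fixes A B :: "'a :: comm_semiring_1 mat"
  assumes "A \<in> carrier_mat n n" "B \<in> carrier_mat n n"
  shows "ctr n (A * B) = ctr n (B * A)"
proof -
  have "ctr n (A * B) = (\<Sum>i<n. \<Sum>l<n. A $$ (i,l) * B $$ (l,i))"
    unfolding ctr_def by (intro sum.cong refl mult_entry[OF assms]) auto
  also have "\<dots> = (\<Sum>l<n. \<Sum>i<n. B $$ (l,i) * A $$ (i,l))"
    by (subst sum.swap) (simp add: mult.commute)
  also have "\<dots> = ctr n (B * A)"
    unfolding ctr_def by (intro sum.cong refl mult_entry[OF assms(2,1), symmetric]) auto
  finally show ?thesis .
qed

lemma ctr_sim:
  fixes P X Q :: "'a :: comm_semiring_1 mat"
  assumes "P \<in> carrier_mat n n" "X \<in> carrier_mat n n" "Q \<in> carrier_mat n n" "Q * P = 1\<^sub>m n"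
  shows "ctr n (P * X * Q) = ctr n X"
proof -
  have "ctr n (P * X * Q) = ctr n (Q * (P * X))"
    using assms by (intro ctr_comm) auto
  also have "Q * (P * X) = (Q * P) * X" by (rule assoc_mult_mat[symmetric]) (use assms in auto)
  also have "\<dots> = X" using assms by simp
  finally show ?thesis .
qed

lemma upper_pow:
  fixes T :: "'a :: comm_semiring_1 mat"
  assumes T: "T \<in> carrier_mat n n" and ut: "upper_triangular T"
  shows "upper_triangular (T ^\<^sub>m k) \<and> (\<forall>i<n. (T ^\<^sub>m k) $$ (i,i) = (T $$ (i,i)) ^ k)"
proof (induction k)
  case 0 then show ?case using T by auto
next
  case (Suc k)
  have Tk: "T ^\<^sub>m k \<in> carrier_mat n n" using T by simp
  have ut_k: "(T ^\<^sub>m k) $$ (i,l) = 0" if "l < i" "i < n" for i l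
    using Suc.IH that T by (auto simp: upper_triangular_def)
  have ut1: "T $$ (l,j) = 0" if "j < l" "l < n" for l j
    using ut that T by (auto simp: upper_triangular_def)
  have "(T ^\<^sub>m Suc k) $$ (i,j) = 0" if "j < i" "i < n" for i j
  proof -
    have "(T ^\<^sub>m Suc k) $$ (i,j) = (\<Sum>l<n. (T ^\<^sub>m k) $$ (i,l) * T $$ (l,j))"
      unfolding pow_mat.simps(2) by (rule mult_entry[OF Tk T]) (use that in auto)
    also have "\<dots> = 0"
    proof (intro sum.neutral ballI)
      fix l assume "l \<in> {..<n}"
      then show "(T ^\<^sub>m k) $$ (i,l) * T $$ (l,j) = 0"
        using ut_k[of l i] ut1[of j l] that by (cases "l < i") auto
    qed
    finally show ?thesis .
  qed
  then have "upper_triangular (T ^\<^sub>m Suc k)" using T by (auto simp: upper_triangular_def)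
  moreover have "(T ^\<^sub>m Suc k) $$ (i,i) = (T $$ (i,i)) ^ Suc k" if "i < n" for i
  proof -
    have "(T ^\<^sub>m Suc k) $$ (i,i) = (\<Sum>l<n. (T ^\<^sub>m k) $$ (i,l) * T $$ (l,i))"
      unfolding pow_mat.simps(2) by (rule mult_entry[OF Tk T]) (use that in auto)
    also have "\<dots> = (\<Sum>l\<in>{i}. (T ^\<^sub>m k) $$ (i,l) * T $$ (l,i))"
    proof (rule sum.mono_neutral_right)
      show "\<forall>l\<in>{..<n} - {i}. (T ^\<^sub>m k) $$ (i,l) * T $$ (l,i) = 0"
        using ut_k ut1 that by (metis Diff_iff lessThan_iff linorder_neqE_nat mult_zero_left mult_zero_right singletonI)
    qed (use that in auto)
    also have "\<dots> = (T $$ (i,i)) ^ Suc k" using Suc.IH that by (simp add: mult.commute)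
    finally show ?thesis .
  qed
  ultimately show ?case by blast
qed

definition Bm :: "nat \<Rightarrow> (nat \<Rightarrow> nat \<Rightarrow> bool) \<Rightarrow> complex mat" where
  "Bm n E = map_mat complex_of_real (adj_mat n E)"

lemma Bm_carrier: "Bm n E \<in> carrier_mat n n"
  unfolding Bm_def adj_mat_def by auto

lemma Bm_entry: "i < n \<Longrightarrow> j < n \<Longrightarrow> Bm n E $$ (i,j) = complex_of_real (aE E i j)"
  unfolding Bm_def adj_mat_def aE_def by auto

lemma Bm_pow: "i < n \<Longrightarrow> j < n \<Longrightarrow> (Bm n E ^\<^sub>m k) $$ (i,j) = complex_of_real (W n E k i j)"
proof (induction k arbitrary: j)
  case 0 then show ?case using Bm_carrier[of n E] by auto
next
  case (Suc k)
  have "(Bm n E ^\<^sub>m Suc k) $$ (i,j) = (\<Sum>l<n. (Bm n E ^\<^sub>m k) $$ (i,l) * Bm n E $$ (l,j))"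
    unfolding pow_mat.simps(2) by (rule mult_entry[OF pow_carrier_mat[OF Bm_carrier] Bm_carrier]) (use Suc.prems in auto)
  also have "\<dots> = (\<Sum>l<n. complex_of_real (W n E k i l * aE E l j))"
    using Suc by (intro sum.cong refl) (simp add: Bm_entry)
  finally show ?case by simp
qed

lemma eig_props:
  "length (adj_eigenvalues n E) = n \<and>
   char_poly (Bm n E) = (\<Prod>a\<leftarrow>adj_eigenvalues n E. [:- a, 1:])"
proof -
  obtain as where "char_poly (Bm n E) = (\<Prod>a\<leftarrow>as. [:- a, 1:]) \<and> length as = n"
    using char_poly_factorized[OF Bm_carrier] by blast
  then have "\<exists>es. length es = n \<and> char_poly (Bm n E) = (\<Prod>a\<leftarrow>es. [:- a, 1:])" by blast
  then show ?thesis unfolding adj_eigenvalues_def Bm_def[symmetric] by (rule someI_ex)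
qed

lemma eig_trace:
  "(\<Sum>i<n. (adj_eigenvalues n E ! i) ^ k) = complex_of_real (\<Sum>u<n. W n E k u u)"
proof -
  let ?es = "adj_eigenvalues n E" and ?B = "Bm n E"
  obtain T P Q where sd: "schur_decomposition ?B ?es = (T,P,Q)" by (cases "schur_decomposition ?B ?es") auto
  from schur_decomposition[OF Bm_carrier eig_props[THEN conjunct2] sd]
  have sw: "similar_mat_wit ?B T P Q" and ut: "upper_triangular T" and dg: "diag_mat T = ?es" by auto
  from sw have car: "T \<in> carrier_mat n n" "P \<in> carrier_mat n n" "Q \<in> carrier_mat n n" "Q * P = 1\<^sub>m n"
    using Bm_carrier[of n E] unfolding similar_mat_wit_def Let_def by auto
  have pw: "?B ^\<^sub>m k = P * T ^\<^sub>m k * Q" by (rule similar_mat_wit_pow_id[OF sw])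
  have "ctr n (?B ^\<^sub>m k) = ctr n (T ^\<^sub>m k)" unfolding pw using car by (intro ctr_sim) auto
  also have "\<dots> = (\<Sum>i<n. (T $$ (i,i)) ^ k)" unfolding ctr_def using upper_pow[OF car(1) ut]
    by (intro sum.cong) auto
  also have "\<dots> = (\<Sum>i<n. (?es ! i) ^ k)"
    using car(1) unfolding dg[symmetric] diag_mat_def by (intro sum.cong) auto
  finally show ?thesis unfolding ctr_def by (simp add: Bm_pow)
qed




lemma eig_root: "e \<in> set (adj_eigenvalues n E) \<Longrightarrow> eigenvalue (Bm n E) e"
  using eig_props[of n E] linear_poly_root eigenvalue_root_char_poly[OF Bm_carrier] by metis

lemma Bm_mulvec:
  assumes "v \<in> carrier_vec n" "i < n"
  shows "(Bm n E *\<^sub>v v) $ i = (\<Sum>j<n. complex_of_real (aE E i j) * v $ j)"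
  using assms Bm_carrier[of n E] by (auto simp: scalar_prod_def lessThan_atLeast0 Bm_entry intro!: sum.cong)

context fixes n E assumes sg: "simple_graph n E"
begin

lemma eig_real:
  assumes "e \<in> set (adj_eigenvalues n E)"
  shows "Im e = 0"
proof -
  obtain v where ev: "eigenvector (Bm n E) v e" using eig_root[OF assms] unfolding eigenvalue_def by blast
  then have v: "v \<in> carrier_vec n" "v \<noteq> 0\<^sub>v n" "Bm n E *\<^sub>v v = e \<cdot>\<^sub>v v"
    unfolding eigenvector_def using Bm_carrier[of n E] by auto
  define q where "q = (\<Sum>i<n. \<Sum>j<n. cnj (v $ i) * complex_of_real (aE E i j) * v $ j)"
  define S where "S = (\<Sum>i<n. cnj (v $ i) * v $ i)"
  have "q = (\<Sum>i<n. cnj (v $ i) * (Bm n E *\<^sub>v v) $ i)"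
    unfolding q_def using v(1) by (simp add: Bm_mulvec sum_distrib_left mult.assoc)
  also have "\<dots> = (\<Sum>i<n. cnj (v $ i) * (e * v $ i))"
    using v by (intro sum.cong refl) simp
  finally have qS: "q = e * S" unfolding S_def by (simp add: sum_distrib_left algebra_simps)
  have "cnj q = (\<Sum>i<n. \<Sum>j<n. v $ i * complex_of_real (aE E i j) * cnj (v $ j))"
    unfolding q_def by simp
  also have "\<dots> = (\<Sum>j<n. \<Sum>i<n. v $ i * complex_of_real (aE E i j) * cnj (v $ j))"
    by (rule sum.swap)
  also have "\<dots> = q" unfolding q_def
    by (intro sum.cong refl) (simp add: aE_sym[OF sg] mult.commute mult.left_commute)
  finally have "Im (cnj q) = Im q" by simp
  then have "Im q = 0" by simp
  have Sre: "S = complex_of_real (\<Sum>i<n. (cmod (v $ i))^2)"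
  proof -
    have "S = (\<Sum>i<n. complex_of_real ((cmod (v $ i))^2))"
      unfolding S_def by (intro sum.cong refl) (simp only: complex_norm_square mult.commute)
    then show ?thesis by (simp only: of_real_sum)
  qed
  obtain i where i: "i < n" "v $ i \<noteq> 0" using v(1,2) by (metis carrier_vecD eq_vecI index_zero_vec(1,2))
  have "(\<Sum>i<n. (cmod (v $ i))^2) > 0"
  proof -
    have "(cmod (v $ i))^2 \<le> (\<Sum>i<n. (cmod (v $ i))^2)"
      using i by (intro member_le_sum) auto
    moreover have "(cmod (v $ i))^2 > 0" using i by simp
    ultimately show ?thesis by linarith
  qed
  then have "S \<noteq> 0" unfolding Sre of_real_eq_0_iff by linarith
  then have "e = q / S" using qS by simp
  then show ?thesis using \<open>Im q = 0\<close> Sre by (simp add: Im_divide_of_real)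
qed

lemma eig_neg:
  assumes bip: "\<forall>u v. u < n \<longrightarrow> v < n \<longrightarrow> E u v \<longrightarrow> (u \<in> X \<longleftrightarrow> v \<notin> X)"
  and e: "e \<in> set (adj_eigenvalues n E)"
  shows "- e \<in> set (adj_eigenvalues n E)"
proof -
  obtain v where ev: "eigenvector (Bm n E) v e" using eig_root[OF e] unfolding eigenvalue_def by blast
  then have v: "v \<in> carrier_vec n" "v \<noteq> 0\<^sub>v n" "Bm n E *\<^sub>v v = e \<cdot>\<^sub>v v"
    unfolding eigenvector_def using Bm_carrier[of n E] by auto
  define w where "w = vec n (\<lambda>i. if i \<in> X then v $ i else - v $ i)"
  have w: "w \<in> carrier_vec n" unfolding w_def by simp
  obtain i where i: "i < n" "v $ i \<noteq> 0" using v(1,2) by (metis carrier_vecD eq_vecI index_zero_vec(1,2))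
  have wne: "w \<noteq> 0\<^sub>v n"
  proof
    assume "w = 0\<^sub>v n"
    then have "w $ i = 0" using i by simp
    then show False using i unfolding w_def by (auto split: if_splits)
  qed
  have "Bm n E *\<^sub>v w = (- e) \<cdot>\<^sub>v w"
  proof (rule eq_vecI)
    show "dim_vec (Bm n E *\<^sub>v w) = dim_vec ((- e) \<cdot>\<^sub>v w)" using w Bm_carrier[of n E] by simp
    fix i assume "i < dim_vec ((- e) \<cdot>\<^sub>v w)"
    then have i: "i < n" using w by simp
    have ev_i: "(\<Sum>j<n. complex_of_real (aE E i j) * v $ j) = e * v $ i"
      using Bm_mulvec[OF v(1) i, of E] v(3) i v(1) by simp
    show "(Bm n E *\<^sub>v w) $ i = ((- e) \<cdot>\<^sub>v w) $ i"
    proof (cases "i \<in> X")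
      case True
      have "(Bm n E *\<^sub>v w) $ i = (\<Sum>j<n. - (complex_of_real (aE E i j) * v $ j))"
        unfolding Bm_mulvec[OF w i]
      proof (intro sum.cong refl)
        fix j assume "j \<in> {..<n}"
        then show "complex_of_real (aE E i j) * w $ j = - (complex_of_real (aE E i j) * v $ j)"
          using bip True i unfolding w_def aE_def by auto
      qed
      then show ?thesis using ev_i True i w unfolding w_def by (simp add: sum_negf)
    next
      case False
      have "(Bm n E *\<^sub>v w) $ i = (\<Sum>j<n. complex_of_real (aE E i j) * v $ j)"
        unfolding Bm_mulvec[OF w i]
      proof (intro sum.cong refl)
        fix j assume "j \<in> {..<n}"
        then show "complex_of_real (aE E i j) * w $ j = complex_of_real (aE E i j) * v $ j"
          using bip False i unfolding w_def aE_def by auto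
      qed
      then show ?thesis using ev_i False i w unfolding w_def by simp
    qed
  qed
  then have "eigenvalue (Bm n E) (- e)" unfolding eigenvalue_def eigenvector_def
    using w wne Bm_carrier[of n E] by auto
  then have "poly (char_poly (Bm n E)) (- e) = 0" using eigenvalue_root_char_poly[OF Bm_carrier] by blast
  then have "poly (\<Prod>a\<leftarrow>adj_eigenvalues n E. [:- a, 1:]) (- e) = 0" using eig_props by metis
  then show ?thesis unfolding poly_prod_list_zero_iff by auto
qed

end



lemma spec_main:
  fixes a t :: "nat \<Rightarrow> real" and n D :: nat
  assumes n2: "n \<ge> 2" and D1: "D \<ge> 1"
    and H1: "\<And>k. (\<Sum>i<n. a i ^ k) = t k"
    and H2: "\<And>k. odd k \<Longrightarrow> t k = 0"
    and H3: "\<And>i. i < n \<Longrightarrow> \<exists>j<n. a j = - a i"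
    and H4: "\<And>j. t (2 * (D * j)) \<ge> (real n - 1) ^ (2 * j)"
  defines "r \<equiv> root D (real n - 1)" and "EE \<equiv> (\<Sum>i<n. exp (a i))"
  shows "EE \<ge> 2 * cosh r + (real n - 2)
    \<and> (EE = 2 * cosh r + (real n - 2) \<longrightarrow> (\<forall>k\<ge>1. t (2 * k) = 2 * r ^ (2 * k)))
    \<and> (t 2 \<le> 2 * r ^ 2 \<longrightarrow> EE = 2 * cosh r + (real n - 2))
    \<and> r \<ge> 1 \<and> r ^ D = real n - 1"
proof -
  define N where "N = real n - 1"
  have N1: "N \<ge> 1" using n2 unfolding N_def by simp
  have Dpos: "D > 0" using D1 by simp
  have s1: "(\<lambda>k. \<Sum>i<n. a i ^ k /\<^sub>R fact k) sums EE"
    unfolding EE_def by (rule sums_sum) (rule exp_converges)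
  have s2: "(\<lambda>k. \<Sum>i<n. (- a i) ^ k /\<^sub>R fact k) sums (\<Sum>i<n. exp (- a i))"
    by (rule sums_sum) (rule exp_converges)
  have eqk: "(\<Sum>i<n. (- a i) ^ k /\<^sub>R fact k) = (\<Sum>i<n. a i ^ k /\<^sub>R fact k)" for k
  proof (cases "even k")
    case True
    then show ?thesis by simp
  next
    case False
    have "(\<Sum>i<n. (- a i) ^ k /\<^sub>R fact k) = - (\<Sum>i<n. a i ^ k) / fact k"
      using False by (simp add: sum_negf sum_divide_distrib divide_inverse mult.commute sum_distrib_left)
    moreover have "(\<Sum>i<n. a i ^ k /\<^sub>R fact k) = (\<Sum>i<n. a i ^ k) / fact k"
      by (simp add: sum_divide_distrib divide_inverse mult.commute sum_distrib_left)
    ultimately show ?thesis using H1[of k] H2[OF False] by simp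
  qed
  have "(\<Sum>i<n. exp (- a i)) = EE" using s1 s2 unfolding eqk by (simp add: sums_unique2)
  then have EEc: "EE = (\<Sum>i<n. cosh (a i))"
    unfolding cosh_field_def EE_def by (simp add: sum_divide_distrib[symmetric] sum.distrib)
  define \<rho> where "\<rho> = Max ((\<lambda>i. \<bar>a i\<bar>) ` {..<n})"
  have fin: "finite ((\<lambda>i. \<bar>a i\<bar>) ` {..<n})" "(\<lambda>i. \<bar>a i\<bar>) ` {..<n} \<noteq> {}" using n2 by (auto simp: lessThan_empty_iff)
  obtain i0 where i0: "i0 < n" "\<bar>a i0\<bar> = \<rho>" using Max_in[OF fin] unfolding \<rho>_def by auto
  have ale: "\<bar>a i\<bar> \<le> \<rho>" if "i < n" for i unfolding \<rho>_def using fin that by auto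
  have rho0: "\<rho> \<ge> 0" using i0 by auto
  have tle: "t (2 * L) \<le> real n * \<rho> ^ (2 * L)" for L
  proof -
    have "t (2 * L) = (\<Sum>i<n. \<bar>a i\<bar> ^ (2 * L))" using H1[of "2*L"] by (simp add: power_even_abs)
    also have "\<dots> \<le> (\<Sum>i<n. \<rho> ^ (2 * L))" using ale by (intro sum_mono power_mono) auto
    finally show ?thesis by simp
  qed
  have rhoD: "\<rho> ^ D \<ge> N"
  proof (rule ccontr)
    assume "\<not> \<rho> ^ D \<ge> N"
    then have lt: "\<rho> ^ D < N" by simp
    define q where "q = (\<rho> ^ D / N)^2"
    have q0: "q \<ge> 0" and q1: "q < 1" unfolding q_def using lt N1 rho0
      by (auto intro!: power_less_one_iff[THEN iffD2] simp: power_less_one_iff)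
    obtain j where j: "q ^ j < 1 / real n" using real_arch_pow_inv[OF _ q1, of "1 / real n"] n2 by auto
    have "N ^ (2 * j) \<le> real n * \<rho> ^ (2 * (D * j))" using H4[of j] tle[of "D * j"] unfolding N_def by linarith
    also have "\<rho> ^ (2 * (D * j)) = q ^ j * N ^ (2 * j)"
      unfolding q_def using N1 by (simp add: power_divide power_mult[symmetric] mult.commute mult.left_commute mult.assoc)
    finally have "N ^ (2 * j) \<le> real n * q ^ j * N ^ (2 * j)" by simp
    moreover have "real n * q ^ j < 1" using j n2 by (simp add: field_simps)
    moreover have "N ^ (2 * j) > 0" using N1 by simp
    ultimately have "real n * q ^ j * N ^ (2 * j) < 1 * N ^ (2 * j)"
      by (intro mult_strict_right_mono) auto
    then show False using \<open>N ^ (2 * j) \<le> real n * q ^ j * N ^ (2 * j)\<close> by simp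
  qed
  have rD: "r ^ D = N" unfolding r_def N_def using Dpos N1 N_def by simp
  have r1: "r \<ge> 1" unfolding r_def using Dpos N1 N_def by simp
  have rle: "r \<le> \<rho>"
  proof -
    have "r \<le> root D (\<rho> ^ D)" unfolding r_def using Dpos rhoD N_def by simp
    then show ?thesis using real_root_power_cancel[OF Dpos rho0] by simp
  qed
  have rhopos: "\<rho> > 0" using rle r1 by simp
  obtain j0 where j0: "j0 < n" "a j0 = - a i0" using H3[OF i0(1)] by blast
  have ij: "i0 \<noteq> j0" using j0 i0 rhopos by auto
  define R where "R = {..<n} - {i0, j0}"
  have cardR: "card R = n - 2" unfolding R_def using i0 j0 ij by (simp add: card_Diff_subset)
  have split: "(\<Sum>i<n. f i) = f i0 + f j0 + (\<Sum>i\<in>R. f i)" for f :: "nat \<Rightarrow> real"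
  proof -
    have e: "{..<n} = insert i0 (insert j0 R)" unfolding R_def using i0 j0 by auto
    have "sum f (insert i0 (insert j0 R)) = f i0 + (f j0 + sum f R)"
      using ij by (subst sum.insert) (auto simp: R_def)
    then show ?thesis using e by (simp add: add.assoc)
  qed
  have ch: "cosh (a i0) = cosh \<rho>" "cosh (a j0) = cosh \<rho>" using i0 j0 by simp_all
  have SR: "(\<Sum>i\<in>R. cosh (a i)) \<ge> real n - 2"
  proof -
    have "(\<Sum>i\<in>R. cosh (a i)) \<ge> (\<Sum>i\<in>R. 1)" by (intro sum_mono cosh_real_ge_1)
    then show ?thesis using cardR n2 by (simp add: of_nat_diff)
  qed
  have crr: "cosh r \<le> cosh \<rho>" using rle r1 by (simp add: cosh_real_nonneg_le_iff)
  have EEs: "EE = 2 * cosh \<rho> + (\<Sum>i\<in>R. cosh (a i))" unfolding EEc split ch by simp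
  have C3: "EE \<ge> 2 * cosh r + (real n - 2)" using EEs SR crr by linarith
  have zeroR_imp: "(\<forall>i\<in>R. a i = 0) \<Longrightarrow> \<rho> = r \<Longrightarrow> EE = 2 * cosh r + (real n - 2)"
    using EEs cardR n2 by (simp add: of_nat_diff)
  have t_form: "(\<forall>i\<in>R. a i = 0) \<Longrightarrow> k \<ge> 1 \<Longrightarrow> t (2 * k) = 2 * \<rho> ^ (2 * k)" for k
  proof -
    assume z: "\<forall>i\<in>R. a i = 0" and k: "k \<ge> 1"
    have "t (2 * k) = a i0 ^ (2*k) + a j0 ^ (2*k) + (\<Sum>i\<in>R. a i ^ (2*k))" using H1 split by metis
    also have "(\<Sum>i\<in>R. a i ^ (2*k)) = 0" using z k by simp
    also have "a i0 ^ (2*k) = \<rho> ^ (2*k)" using i0 by (metis power_even_abs even_mult_iff even_numeral)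
    also have "a j0 ^ (2*k) = \<rho> ^ (2*k)" using i0 j0 by (metis power_even_abs even_mult_iff even_numeral abs_minus)
    finally show ?thesis by simp
  qed
  have C4: "EE = 2 * cosh r + (real n - 2) \<longrightarrow> (\<forall>k\<ge>1. t (2 * k) = 2 * r ^ (2 * k))"
  proof
    assume eq: "EE = 2 * cosh r + (real n - 2)"
    have c1: "cosh \<rho> = cosh r" using eq EEs SR crr by linarith
    then have rr: "\<rho> = r" using rho0 r1 by simp
    have "(\<Sum>i\<in>R. cosh (a i) - 1) = 0"
      using eq EEs c1 cardR n2 by (simp add: sum_subtractf of_nat_diff)
    then have "\<forall>i\<in>R. cosh (a i) - 1 = 0"
      using sum_nonneg_eq_0_iff[of R "\<lambda>i. cosh (a i) - 1"] cosh_real_ge_1 unfolding R_def by auto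
    then have "\<forall>i\<in>R. cosh (a i) = cosh 0" by simp
    then have z: "\<forall>i\<in>R. a i = 0" by (simp only: cosh_real_eq_iff) simp
    show "\<forall>k\<ge>1. t (2 * k) = 2 * r ^ (2 * k)" using t_form[OF z] rr by simp
  qed
  have C5: "t 2 \<le> 2 * r ^ 2 \<longrightarrow> EE = 2 * cosh r + (real n - 2)"
  proof
    assume t2: "t 2 \<le> 2 * r ^ 2"
    have "t 2 = a i0 ^ 2 + a j0 ^ 2 + (\<Sum>i\<in>R. a i ^ 2)" using H1 split by metis
    also have "a i0 ^ 2 = \<rho> ^ 2" using i0 by (metis power2_abs)
    also have "a j0 ^ 2 = \<rho> ^ 2" using i0 j0 by (metis power2_abs abs_minus)
    finally have t2e: "t 2 = 2 * \<rho>^2 + (\<Sum>i\<in>R. a i ^ 2)" by simp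
    have sq0: "(\<Sum>i\<in>R. a i ^ 2) \<ge> 0" by (intro sum_nonneg) simp
    have "\<rho>^2 \<le> r^2" using t2 t2e sq0 by linarith
    then have "\<rho> \<le> r" using rho0 r1 by (simp add: power2_le_iff_abs_le)
    then have rr: "\<rho> = r" using rle by simp
    then have "(\<Sum>i\<in>R. a i ^ 2) = 0" using t2 t2e sq0 by simp
    then have "\<forall>i\<in>R. a i ^ 2 = 0"
      using sum_nonneg_eq_0_iff[of R "\<lambda>i. a i ^ 2"] unfolding R_def by auto
    then have "\<forall>i\<in>R. a i = 0" by simp
    then show "EE = 2 * cosh r + (real n - 2)" using zeroR_imp rr by simp
  qed
  show ?thesis using C3 C4 C5 r1 rD unfolding N_def by blast
qed




lemma walk1: "u < n \<Longrightarrow> is_walk n E [u]" unfolding is_walk_def by auto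
lemma walk2: "u < n \<Longrightarrow> v < n \<Longrightarrow> E u v \<Longrightarrow> is_walk n E [u, v]"
  unfolding is_walk_def by (auto simp: less_Suc_eq)
lemma walk3: "u < n \<Longrightarrow> w < n \<Longrightarrow> v < n \<Longrightarrow> E u w \<Longrightarrow> E w v \<Longrightarrow> is_walk n E [u, w, v]"
  unfolding is_walk_def by (auto simp: less_Suc_eq)

lemma sum_ind_card: "(\<Sum>v\<in>A. if P v then (1::real) else 0) = real (card {v\<in>A. P v})" if "finite A"
  using that by (simp add: sum.If_cases Int_def conj_commute)

lemma spectral_facts:
  assumes sg: "simple_graph n E" and con: "connected_graph n E" and n2: "n \<ge> 2"
    and bip: "\<forall>u v. u < n \<longrightarrow> v < n \<longrightarrow> E u v \<longrightarrow> (u \<in> X \<longleftrightarrow> v \<notin> X)"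
  defines "r \<equiv> root (diameter n E) (real n - 1)"
  shows "estrada_index n E \<ge> 2 * cosh r + (real n - 2)
    \<and> (estrada_index n E = 2 * cosh r + (real n - 2) \<longrightarrow> (\<forall>k\<ge>1. tr n E (2 * k) = 2 * r ^ (2 * k)))
    \<and> (tr n E 2 \<le> 2 * r ^ 2 \<longrightarrow> estrada_index n E = 2 * cosh r + (real n - 2))
    \<and> r \<ge> 1 \<and> r ^ (diameter n E) = real n - 1"
proof -
  define es where "es = adj_eigenvalues n E"
  define a where "a i = Re (es ! i)" for i
  have len: "length es = n" using eig_props unfolding es_def by blast
  have esa: "es ! i = complex_of_real (a i)" if "i < n" for i
  proof -
    have "Im (es ! i) = 0" using eig_real[OF sg] that len unfolding es_def by auto
    then show ?thesis unfolding a_def by (simp add: complex_eq_iff)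
  qed
  have H1: "(\<Sum>i<n. a i ^ k) = tr n E k" for k
  proof -
    have "complex_of_real (\<Sum>i<n. a i ^ k) = (\<Sum>i<n. (es ! i) ^ k)" by (simp add: esa)
    also have "\<dots> = complex_of_real (tr n E k)" unfolding es_def using eig_trace[of n E k] by (simp add: tr_def[OF sg])
    finally show ?thesis by (simp only: of_real_eq_iff)
  qed
  have H2: "tr n E k = 0" if "odd k" for k using tr_odd[OF sg bip that] .
  have H3: "\<exists>j<n. a j = - a i" if "i < n" for i
  proof -
    have "es ! i \<in> set es" using that len by simp
    then have "- (es ! i) \<in> set es" using eig_neg[OF sg bip] unfolding es_def by blast
    then obtain j where "j < n" "es ! j = - (es ! i)" using len by (auto simp: in_set_conv_nth)
    then show ?thesis using that by (intro exI[of _ j]) (simp add: a_def)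
  qed
  have H4: "tr n E (2 * (diameter n E * j)) \<ge> (real n - 1) ^ (2 * j)" for j
    using tr_diam[OF sg con n2] .
  have EE: "estrada_index n E = (\<Sum>i<n. exp (a i))"
  proof -
    have "estrada_index n E = Re (\<Sum>i<n. exp (es ! i))"
      unfolding estrada_index_def es_def[symmetric] by (simp add: sum_list_sum_nth len lessThan_atLeast0)
    also have "\<dots> = Re (\<Sum>i<n. complex_of_real (exp (a i)))"
      by (intro arg_cong[of _ _ Re] sum.cong refl) (simp add: esa exp_of_real)
    finally show ?thesis by (simp only: Re_complex_of_real of_real_sum[symmetric])
  qed
  show ?thesis unfolding EE r_def
    by (rule spec_main[OF n2 diam_ge1[OF sg con n2] H1 H2 H3 H4])
qed




lemma sq_exp: "((x::real) - r^2*y)^2 = x*x - 2*r^2*(x*y) + r^4*(y*y)"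
  by (simp add: power2_eq_square algebra_simps power4_eq_xxxx)

lemma W3_eq:
  assumes sg: "simple_graph n E" and tt: "\<forall>k\<ge>1. tr n E (2 * k) = 2 * r ^ (2 * k)"
    and u: "u < n" and v: "v < n"
  shows "W n E 3 u v = r^2 * aE E u v"
proof -
  have t6: "tr n E (2*3) = 2 * r^(2*3)" using tt[rule_format, of 3] by simp
  have t4: "tr n E (2*2) = 2 * r^(2*2)" using tt[rule_format, of 2] by simp
  have t2: "tr n E (2*1) = 2 * r^(2*1)" using tt[rule_format, of 1] by simp
  let ?X = "\<lambda>u v. W n E 3 u v" and ?Y = "\<lambda>u v. W n E 1 u v"
  have e1: "(2::nat)*3 = 3+3" "(2::nat)*2 = 3+1" "(2::nat)*1 = 1+1" by simp_all
  have a6: "tr n E (2*3) = (\<Sum>u<n. \<Sum>v<n. ?X u v * ?X u v)" unfolding e1 by (rule tr_add[OF sg])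
  have a4: "tr n E (2*2) = (\<Sum>u<n. \<Sum>v<n. ?X u v * ?Y u v)" unfolding e1 by (rule tr_add[OF sg])
  have a2: "tr n E (2*1) = (\<Sum>u<n. \<Sum>v<n. ?Y u v * ?Y u v)" unfolding e1 by (rule tr_add[OF sg])
  have "(\<Sum>u<n. \<Sum>v<n. (?X u v - r^2 * ?Y u v)^2)
      = (\<Sum>u<n. \<Sum>v<n. ?X u v * ?X u v - 2 * r^2 * (?X u v * ?Y u v) + r^4 * (?Y u v * ?Y u v))"
    by (intro sum.cong refl) (rule sq_exp)
  also have "\<dots> = (\<Sum>u<n. \<Sum>v<n. ?X u v * ?X u v) - 2 * r^2 * (\<Sum>u<n. \<Sum>v<n. ?X u v * ?Y u v)
      + r^4 * (\<Sum>u<n. \<Sum>v<n. ?Y u v * ?Y u v)"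
    by (simp only: sum.distrib sum_subtractf sum_distrib_left)
  also have "\<dots> = 0" unfolding a6[symmetric] a4[symmetric] a2[symmetric] t6 t4 t2
    by (simp add: algebra_simps power_numeral_reduce)
  finally have z: "(\<Sum>u<n. \<Sum>v<n. (?X u v - r^2 * ?Y u v)^2) = 0" .
  have "\<forall>u\<in>{..<n}. (\<Sum>v<n. (?X u v - r^2 * ?Y u v)^2) = 0"
    using z by (subst (asm) sum_nonneg_eq_0_iff) (auto intro: sum_nonneg)
  then have "(\<Sum>v<n. (?X u v - r^2 * ?Y u v)^2) = 0" using u by blast
  then have "\<forall>v\<in>{..<n}. (?X u v - r^2 * ?Y u v)^2 = 0"
    by (subst (asm) sum_nonneg_eq_0_iff) auto
  then have "?X u v = r^2 * ?Y u v" using v by auto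
  then show ?thesis using W_one[OF u] by simp
qed

lemma W_odd:
  assumes W3: "\<And>u v. u < n \<Longrightarrow> v < n \<Longrightarrow> W n E 3 u v = r^2 * aE E u v"
  shows "u < n \<Longrightarrow> v < n \<Longrightarrow> W n E (2 * k + 1) u v = r ^ (2 * k) * aE E u v"
proof (induction k arbitrary: v)
  case 0 then show ?case using W_one by simp
next
  case (Suc k)
  have "W n E (2 * Suc k + 1) u v = W n E (2 * k + 3) u v" by (rule arg_cong[of _ _ "\<lambda>m. W n E m u v"]) simp
  also have "\<dots> = (\<Sum>w<n. W n E (2 * k) u w * W n E 3 w v)" by (rule W_add[OF Suc.prems(2)])
  also have "\<dots> = (\<Sum>w<n. r^2 * (W n E (2 * k) u w * aE E w v))"
  proof (intro sum.cong refl)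
    fix w assume "w \<in> {..<n}"
    then show "W n E (2 * k) u w * W n E 3 w v = r^2 * (W n E (2 * k) u w * aE E w v)"
      using W3[of w v] Suc.prems by simp
  qed
  also have "\<dots> = r^2 * (\<Sum>w<n. W n E (2 * k) u w * aE E w v)"
    by (simp only: sum_distrib_left)
  also have "(\<Sum>w<n. W n E (2 * k) u w * aE E w v) = W n E (2 * k + 1) u v"
    by (simp only: Suc_eq_plus1[symmetric] W.simps(2))
  also have "\<dots> = r ^ (2 * k) * aE E u v" using Suc by simp
  finally show ?case by (simp del: W.simps add: power_add power2_eq_square algebra_simps)
qed




lemma tr2_aE:
  assumes sg: "simple_graph n E"
  shows "tr n E 2 = (\<Sum>u<n. \<Sum>v<n. aE E u v)"
proof -
  have e: "(2::nat) = 1 + 1" by simp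
  have "tr n E 2 = (\<Sum>u<n. \<Sum>v<n. W n E 1 u v * W n E 1 u v)"
    by (subst e, rule tr_add[OF sg])
  also have "\<dots> = (\<Sum>u<n. \<Sum>v<n. aE E u v)"
    by (intro sum.cong refl) (simp only: W_one lessThan_iff, simp add: aE_def)
  finally show ?thesis .
qed

lemma star_tr2:
  assumes sg: "simple_graph n E" and st: "is_star n E" and n2: "n \<ge> 2"
  shows "tr n E 2 = 2 * (real n - 1)"
proof -
  obtain c where c: "c < n" "\<And>u v. u < n \<Longrightarrow> v < n \<Longrightarrow> E u v \<longleftrightarrow> u \<noteq> v \<and> (u = c \<or> v = c)"
    using st unfolding is_star_def by blast
  have inner: "(\<Sum>v<n. aE E u v) = (if u = c then real n - 1 else 1)" if u: "u < n" for u
  proof (cases "u = c")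
    case True
    have "(\<Sum>v<n. aE E u v) = (\<Sum>v<n. if v \<noteq> c then 1 else 0)"
      using c True u by (intro sum.cong refl) (auto simp: aE_def)
    also have "\<dots> = real (card {v\<in>{..<n}. v \<noteq> c})" by (rule sum_ind_card) simp
    also have "{v\<in>{..<n}. v \<noteq> c} = {..<n} - {c}" by auto
    finally show ?thesis using True c by (simp add: of_nat_diff)
  next
    case False
    have "(\<Sum>v<n. aE E u v) = (\<Sum>v<n. if v = c then 1 else 0)"
      using c False u by (intro sum.cong refl) (auto simp: aE_def)
    also have "\<dots> = 1" using c by simp
    finally show ?thesis using False by simp
  qed
  have "tr n E 2 = (\<Sum>u<n. if u = c then real n - 1 else 1)"
    unfolding tr2_aE[OF sg] by (intro sum.cong refl) (simp add: inner)
  also have "\<dots> = (real n - 1) + (\<Sum>u\<in>{..<n} - {c}. if u = c then real n - 1 else 1)"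
    using c by (subst sum.remove[of _ c]) auto
  also have "(\<Sum>u\<in>{..<n} - {c}. if u = c then real n - 1 else 1) = (\<Sum>u\<in>{..<n} - {c}. 1)"
    by (intro sum.cong refl) auto
  also have "\<dots> = real n - 1" using c by (simp add: of_nat_diff)
  finally show ?thesis by simp
qed

lemma star_diam:
  assumes sg: "simple_graph n E" and st: "is_star n E" and n2: "n \<ge> 2"
  shows "diameter n E \<le> 2"
proof -
  obtain c where c: "c < n" "\<And>u v. u < n \<Longrightarrow> v < n \<Longrightarrow> E u v \<longleftrightarrow> u \<noteq> v \<and> (u = c \<or> v = c)"
    using st unfolding is_star_def by blast
  have "graph_dist n E u v \<le> 2" if u: "u < n" and v: "v < n" for u v
  proof -
    consider "u = v" | "u \<noteq> v" "u = c \<or> v = c" | "u \<noteq> v" "u \<noteq> c" "v \<noteq> c" by blast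
    then show ?thesis
    proof cases
      case 1
      then have "graph_dist n E u v \<le> 0" using gd_le[OF sg walk1[OF u], where u=u and v=v and k=0] by simp
      then show ?thesis by simp
    next
      case 2
      then have "E u v" using c u v by blast
      then have "graph_dist n E u v \<le> 1" using gd_le[OF sg walk2[OF u v], where u=u and v=v and k=1] by simp
      then show ?thesis by simp
    next
      case 3
      then have "E u c" "E c v" using c u v by blast+
      then show ?thesis using gd_le[OF sg walk3[OF u c(1) v], where u=u and v=v and k=2] by simp
    qed
  qed
  moreover have "graph_dist n E 0 0 \<in> {graph_dist n E u v | u v. u < n \<and> v < n}" using n2 by (intro CollectI exI[of _ 0]) auto
  then have "{graph_dist n E u v | u v. u < n \<and> v < n} \<noteq> {}" by blast
  ultimately show ?thesis unfolding diameter_def using diam_fin[OF sg]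
    by (subst Max_le_iff) auto
qed

theorem mainTheorem11:
  fixes n :: nat and E :: "nat \<Rightarrow> nat \<Rightarrow> bool"
  assumes "simple_graph n E" and "connected_graph n E" and "bipartite n E" and "n \<ge> 2"
  shows "estrada_index n E \<ge> 2 * cosh (root (diameter n E) (real n - 1)) + (real n - 2)
         \<and> (estrada_index n E = 2 * cosh (root (diameter n E) (real n - 1)) + (real n - 2)
             \<longleftrightarrow> is_star n E)"
proof -
  note sg = assms(1) and con = assms(2) and n2 = assms(4)
  obtain X where bip: "\<forall>u v. u < n \<longrightarrow> v < n \<longrightarrow> E u v \<longrightarrow> (u \<in> X \<longleftrightarrow> v \<notin> X)"
    using assms(3) unfolding bipartite_def by blast
  define D where "D = diameter n E"
  define r where "r = root D (real n - 1)"
  have SF: "estrada_index n E \<ge> 2 * cosh r + (real n - 2)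
    \<and> (estrada_index n E = 2 * cosh r + (real n - 2) \<longrightarrow> (\<forall>k\<ge>1. tr n E (2 * k) = 2 * r ^ (2 * k)))
    \<and> (tr n E 2 \<le> 2 * r ^ 2 \<longrightarrow> estrada_index n E = 2 * cosh r + (real n - 2))
    \<and> r \<ge> 1 \<and> r ^ D = real n - 1"
    unfolding r_def D_def by (rule spectral_facts[OF sg con n2 bip])
  have r1: "r \<ge> 1" and rD: "r ^ D = real n - 1" using SF by auto
  have D1: "D \<ge> 1" unfolding D_def using diam_ge1[OF sg con n2] .
  have star_eq: "estrada_index n E = 2 * cosh r + (real n - 2)" if st: "is_star n E"
  proof -
    have "D \<le> 2" unfolding D_def using star_diam[OF sg st n2] .
    then have "r ^ D \<le> r ^ 2" using r1 by (intro power_increasing) auto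
    then have "tr n E 2 \<le> 2 * r ^ 2" using star_tr2[OF sg st n2] rD by simp
    then show ?thesis using SF by blast
  qed
  have eq_star: "is_star n E" if eq: "estrada_index n E = 2 * cosh r + (real n - 2)"
  proof -
    have tt: "\<forall>k\<ge>1. tr n E (2 * k) = 2 * r ^ (2 * k)" using SF eq by blast
    have W3: "\<And>u v. u < n \<Longrightarrow> v < n \<Longrightarrow> W n E 3 u v = r^2 * aE E u v"
      by (rule W3_eq[OF sg tt])
    have compl: "E u v \<longleftrightarrow> (u \<in> X) \<noteq> (v \<in> X)" if u: "u < n" and v: "v < n" for u v
    proof
      assume "E u v" then show "(u \<in> X) \<noteq> (v \<in> X)" using bip u v by blast
    next
      assume uv: "(u \<in> X) \<noteq> (v \<in> X)"
      obtain xs where xs: "is_walk n E xs" "hd xs = u" "last xs = v" "length xs = Suc (graph_dist n E u v)"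
        using gd_walk[OF sg con u v] by blast
      define d where "d = graph_dist n E u v"
      have W1: "W n E d u v \<ge> 1" using walk_W[OF sg xs(1) xs(4)] xs unfolding d_def by simp
      then have "((u \<in> X) = (v \<in> X)) = even d" using W_parity[OF sg bip u v] by simp
      then have "odd d" using uv by simp
      then obtain k where k: "d = 2 * k + 1" using oddE by blast
      have "W n E d u v = r ^ (2 * k) * aE E u v" unfolding k using W_odd[OF W3 u v] .
      then have "aE E u v \<noteq> 0" using W1 by auto
      then show "E u v" unfolding aE_def by (auto split: if_splits)
    qed
    define Xn where "Xn = {u\<in>{..<n}. u \<in> X}"
    define Yn where "Yn = {u\<in>{..<n}. u \<notin> X}"
    have finX: "finite Xn" "finite Yn" unfolding Xn_def Yn_def by auto
    have inner: "(\<Sum>v<n. aE E u v) = (if u \<in> X then real (card Yn) else real (card Xn))" if u: "u < n" for u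
    proof -
      have "(\<Sum>v<n. aE E u v) = (\<Sum>v<n. if (u \<in> X) \<noteq> (v \<in> X) then 1 else 0)"
        using compl u by (intro sum.cong refl) (auto simp: aE_def)
      also have "\<dots> = real (card {v\<in>{..<n}. (u \<in> X) \<noteq> (v \<in> X)})" by (rule sum_ind_card) simp
      also have "{v\<in>{..<n}. (u \<in> X) \<noteq> (v \<in> X)} = (if u \<in> X then Yn else Xn)"
        unfolding Xn_def Yn_def by auto
      finally show ?thesis by simp
    qed
    have "tr n E 2 = (\<Sum>u<n. if u \<in> X then real (card Yn) else real (card Xn))"
      unfolding tr2_aE[OF sg] by (intro sum.cong refl) (simp add: inner)
    also have "\<dots> = (\<Sum>u\<in>Xn. real (card Yn)) + (\<Sum>u\<in>Yn. real (card Xn))"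
    proof -
      have "{..<n} \<inter> {x. x \<in> X} = Xn" "{..<n} \<inter> - {x. x \<in> X} = Yn" unfolding Xn_def Yn_def by auto
      then show ?thesis by (subst sum.If_cases) auto
    qed
    also have "\<dots> = 2 * (real (card Xn) * real (card Yn))" by simp
    finally have t2ab: "tr n E 2 = 2 * (real (card Xn) * real (card Yn))" .
    have "tr n E 2 = 2 * r^2" using tt[rule_format, of 1] by simp
    then have ab: "real (card Xn) * real (card Yn) = r^2" using t2ab by simp
    have cXY: "card Xn + card Yn = n"
    proof -
      have "Xn \<union> Yn = {..<n}" "Xn \<inter> Yn = {}" unfolding Xn_def Yn_def by auto
      then show ?thesis using card_Un_disjoint[OF finX] by simp
    qed
    have r2: "r^2 \<ge> 1" using r1 by simp
    have a1: "card Xn \<ge> 1" and b1: "card Yn \<ge> 1"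
      using ab r2 by (auto simp: Suc_le_eq intro: ccontr)
    show "is_star n E"
    proof (cases "card Xn \<ge> 2 \<and> card Yn \<ge> 2")
      case True
      then obtain x1 where x1: "x1 \<in> Xn" by fastforce
      have "card (Xn - {x1}) \<ge> 1" using True x1 finX by (subst card_Diff_singleton) auto
      then have "Xn - {x1} \<noteq> {}" by (metis card.empty not_one_le_zero)
      then obtain x2 where x2: "x2 \<in> Xn - {x1}" by blast
      have "\<not> E x1 x2" using x1 x2 compl unfolding Xn_def by auto
      then have "graph_dist n E x1 x2 \<ge> 2" using gd_ge2[OF sg con] x1 x2 unfolding Xn_def by auto
      then have "D \<ge> 2" using gd_le_diam[OF sg, of x1 x2] x1 x2 unfolding D_def Xn_def by auto
      then have "r ^ 2 \<le> r ^ D" using r1 by (intro power_increasing) auto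
      then have "real (card Xn) * real (card Yn) \<le> real (card Xn) + real (card Yn) - 1"
        using ab rD cXY by (simp add: of_nat_add[symmetric] del: of_nat_add)
      moreover have "real (card Xn) * real (card Yn) \<ge> real (card Xn) + real (card Yn)"
      proof -
        have "(real (card Xn) - 1) * (real (card Yn) - 1) \<ge> 1 * 1"
          using True by (intro mult_mono) auto
        then show ?thesis by (simp add: algebra_simps)
      qed
      ultimately show ?thesis by simp
    next
      case False
      then have "card Xn = 1 \<or> card Yn = 1" using a1 b1 by auto
      then show ?thesis
      proof
        assume "card Xn = 1"
        then obtain c where Xc: "Xn = {c}" by (rule card_1_singletonE)
        have cn: "c < n" and cX: "c \<in> X" using Xc unfolding Xn_def by auto
        have iff: "u \<in> X \<longleftrightarrow> u = c" if "u < n" for u using Xc that unfolding Xn_def by auto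
        show ?thesis unfolding is_star_def
          by (rule exI[of _ c]) (use cn compl iff in auto)
      next
        assume "card Yn = 1"
        then obtain c where Yc: "Yn = {c}" by (rule card_1_singletonE)
        have cn: "c < n" using Yc unfolding Yn_def by auto
        have iff: "u \<notin> X \<longleftrightarrow> u = c" if "u < n" for u using Yc that unfolding Yn_def by auto
        show ?thesis unfolding is_star_def
          by (rule exI[of _ c]) (use cn compl iff in auto)
      qed
    qed
  qed
  show ?thesis using SF star_eq eq_star unfolding r_def D_def by blast
qed


end
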